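(* Let $L$ be an atomic $0$-distributive lattice with at least three atoms. Then the metric dimension $\dim_M(G^c(L))$ is finite if and only if $G^c(L)$ is finite.
   Context: A lattice $L$ with $0$ is $0$-distributive if $a\wedge b=0$ and $a\wedge c=0$ imply $a\wedge(b\vee c)=0$; it is atomic if every nonzero element lies above an atom. $Z^*(L)=\{a\in L\setminus\{0\}:\ a\wedge b=0\text{ for some } b\neq 0\}$. $G^c(L)$ is the graph with vertex set $Z^*(L)$, distinct $a,b$ adjacent iff $a\wedge b\neq 0$ (under these hypotheses it is connected). For a connected graph $G$ and $S=\{v_1,\dots,v_k\}\subseteq V(G)$, the representation of $v$ is $D(v\mid S)=(d(v,v_1),\dots,d(v,v_k))$; $S$ is resolving if $D(u\mid S)=D(v\mid S)$ for $u,v\in V(G)\setminus S$ implies $u=v$; $\dim_M(G)$ is the minimum cardinality of a resolving set. *)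

theory Defs
  imports Main "HOL-Library.Extended_Nat"
begin

unbundle lattice_syntax

definition zero_distributive :: "'a::bounded_lattice_bot itself \<Rightarrow> bool" where
  "zero_distributive _ \<longleftrightarrow>
     (\<forall>a b c :: 'a. a \<sqinter> b = \<bottom> \<and> a \<sqinter> c = \<bottom> \<longrightarrow> a \<sqinter> (b \<squnion> c) = \<bottom>)"

definition is_atom :: "'a::bounded_lattice_bot \<Rightarrow> bool" where
  "is_atom a \<longleftrightarrow> a \<noteq> \<bottom> \<and> (\<forall>x. x \<le> a \<longrightarrow> x = \<bottom> \<or> x = a)"

definition atomic_lattice :: "'a::bounded_lattice_bot itself \<Rightarrow> bool" where
  "atomic_lattice _ \<longleftrightarrow> (\<forall>x :: 'a. x \<noteq> \<bottom> \<longrightarrow> (\<exists>a. is_atom a \<and> a \<le> x))"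

definition zero_divisors :: "'a::bounded_lattice_bot set" where
  "zero_divisors = {a. a \<noteq> \<bottom> \<and> (\<exists>b. b \<noteq> \<bottom> \<and> a \<sqinter> b = \<bottom>)}"

text \<open>Adjacency of the graph G^c(L) on vertex set zero_divisors.\<close>
definition Gc_adj :: "'a::bounded_lattice_bot \<Rightarrow> 'a \<Rightarrow> bool" where
  "Gc_adj a b \<longleftrightarrow> a \<noteq> b \<and> a \<sqinter> b \<noteq> \<bottom>"

definition edge_rel :: "'v set \<Rightarrow> ('v \<Rightarrow> 'v \<Rightarrow> bool) \<Rightarrow> ('v \<times> 'v) set" where
  "edge_rel V E = {(x, y). x \<in> V \<and> y \<in> V \<and> E x y}"

definition gdist :: "'v set \<Rightarrow> ('v \<Rightarrow> 'v \<Rightarrow> bool) \<Rightarrow> 'v \<Rightarrow> 'v \<Rightarrow> enat" where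
  "gdist V E u v = Inf {enat n | n. (u, v) \<in> (edge_rel V E) ^^ n}"

definition resolving :: "'v set \<Rightarrow> ('v \<Rightarrow> 'v \<Rightarrow> bool) \<Rightarrow> 'v set \<Rightarrow> bool" where
  "resolving V E S \<longleftrightarrow> S \<subseteq> V \<and>
     (\<forall>u \<in> V - S. \<forall>v \<in> V - S. (\<forall>s \<in> S. gdist V E u s = gdist V E v s) \<longrightarrow> u = v)"

text \<open>Metric dimension: minimum cardinality of a resolving set; \<infinity> if no finite one exists.\<close>
definition metric_dim :: "'v set \<Rightarrow> ('v \<Rightarrow> 'v \<Rightarrow> bool) \<Rightarrow> enat" where
  "metric_dim V E = Inf {enat (card S) | S. finite S \<and> resolving V E S}"

end

theory Submission
  imports Defs "HOL-Library.FuncSet"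
begin

lemma relpow_refl_sub:
  assumes "T \<subseteq> R \<union> Id"
  shows "(u, v) \<in> T ^^ n \<Longrightarrow> \<exists>m\<le>n. (u, v) \<in> R ^^ m"
proof (induction n arbitrary: v)
  case 0
  then show ?case by auto
next
  case (Suc n)
  then obtain w where w1: "(u, w) \<in> T ^^ n" and w2: "(w, v) \<in> T" by auto
  from Suc.IH[OF w1] obtain m where m: "m \<le> n" "(u, w) \<in> R ^^ m" by blast
  show ?case
  proof (cases "w = v")
    case True
    then show ?thesis using m by (intro exI[of _ m]) auto
  next
    case False
    then have "(w, v) \<in> R" using w2 assms by auto
    then have "(u, v) \<in> R ^^ Suc m" using m by auto
    then show ?thesis using m by (intro exI[of _ "Suc m"]) auto
  qed
qed

lemma atom_meet:
  fixes p q :: "'a::bounded_lattice_bot"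
  assumes "is_atom p" "is_atom q" "p \<noteq> q"
  shows "p \<sqinter> q = \<bottom>"
proof -
  have "p \<sqinter> q \<le> p" by simp
  then have "p \<sqinter> q = \<bottom> \<or> p \<sqinter> q = p" using assms(1) unfolding is_atom_def by blast
  moreover have "p \<sqinter> q = p \<Longrightarrow> p = q"
  proof -
    assume "p \<sqinter> q = p"
    then have "p \<le> q" by (metis inf.absorb_iff1)
    then show "p = q" using assms(1,2) unfolding is_atom_def by blast
  qed
  ultimately show ?thesis using assms(3) by blast
qed

lemma dist_bound:
  fixes L :: "'a::bounded_lattice_bot itself"
  assumes zd: "zero_distributive L"
    and at: "atomic_lattice L"
    and three: "\<exists>a b c :: 'a. is_atom a \<and> is_atom b \<and> is_atom c \<and> a \<noteq> b \<and> a \<noteq> c \<and> b \<noteq> c"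
    and u: "(u::'a) \<in> zero_divisors" and v: "v \<in> zero_divisors"
  shows "gdist zero_divisors Gc_adj u v \<le> enat 4"
proof -
  define T where "T = {(x, y). x \<in> (zero_divisors::'a set) \<and> y \<in> zero_divisors \<and> x \<sqinter> y \<noteq> \<bottom>}"
  have TR: "T \<subseteq> edge_rel zero_divisors Gc_adj \<union> Id"
    unfolding T_def edge_rel_def Gc_adj_def by auto
  have "u \<noteq> \<bottom>" "v \<noteq> \<bottom>" using u v unfolding zero_divisors_def by auto
  then obtain p q where p: "is_atom p" "p \<le> u" and q: "is_atom q" "q \<le> v"
    using at unfolding atomic_lattice_def by blast
  obtain a b c :: 'a where abc: "is_atom a" "is_atom b" "is_atom c" "a \<noteq> b" "a \<noteq> c" "b \<noteq> c"
    using three by blast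
  obtain r where r: "is_atom r" "r \<noteq> p" "r \<noteq> q"
    using abc by metis
  have rp: "r \<sqinter> p = \<bottom>" using atom_meet r p by blast
  have rq: "r \<sqinter> q = \<bottom>" using atom_meet r q by blast
  have rpq: "r \<sqinter> (p \<squnion> q) = \<bottom>" using zd rp rq unfolding zero_distributive_def by blast
  have p0: "p \<noteq> \<bottom>" "q \<noteq> \<bottom>" "r \<noteq> \<bottom>" using p q r unfolding is_atom_def by auto
  have pZ: "p \<in> zero_divisors" unfolding zero_divisors_def using p0 rp
    by (auto simp: inf_commute intro!: exI[of _ r])
  have qZ: "q \<in> zero_divisors" unfolding zero_divisors_def using p0 rq
    by (auto simp: inf_commute intro!: exI[of _ r])
  have pqne: "p \<squnion> q \<noteq> \<bottom>" using p0 by (metis bot_unique sup_ge1)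
  have pqZ: "p \<squnion> q \<in> zero_divisors" unfolding zero_divisors_def using pqne p0 rpq
    by (auto simp: inf_commute intro!: exI[of _ r])
  have t1: "(u, p) \<in> T" unfolding T_def using u pZ p p0 by (auto simp: inf.absorb2)
  have t2: "(p, p \<squnion> q) \<in> T" unfolding T_def using pZ pqZ p0 by (auto simp: inf.absorb1)
  have t3: "(p \<squnion> q, q) \<in> T" unfolding T_def using qZ pqZ p0 by (auto simp: inf.absorb2)
  have t4: "(q, v) \<in> T" unfolding T_def using v qZ q p0 by (auto simp: inf.absorb1)
  have "(u, v) \<in> T ^^ 4"
    using t1 t2 t3 t4 by (auto simp: numeral_eq_Suc relpow_Suc_I2 relpow_Suc_I relpow_1 intro!: relcompI)
  then obtain m where m: "m \<le> 4" "(u, v) \<in> (edge_rel zero_divisors Gc_adj) ^^ m"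
    using relpow_refl_sub[OF TR] by blast
  then have "gdist zero_divisors Gc_adj u v \<le> enat m"
    unfolding gdist_def by (auto intro!: Inf_lower)
  also have "\<dots> \<le> enat 4" using m by simp
  finally show ?thesis .
qed

theorem lemma3p2:
  fixes L :: "'a::bounded_lattice_bot itself"
  assumes "zero_distributive L"
    and "atomic_lattice L"
    and "\<exists>a b c :: 'a. is_atom a \<and> is_atom b \<and> is_atom c \<and> a \<noteq> b \<and> a \<noteq> c \<and> b \<noteq> c"
  shows "metric_dim (zero_divisors :: 'a set) Gc_adj \<noteq> \<infinity> \<longleftrightarrow> finite (zero_divisors :: 'a set)"
proof
  assume h: "metric_dim (zero_divisors :: 'a set) Gc_adj \<noteq> \<infinity>"
  have "{enat (card S) | S. finite S \<and> resolving (zero_divisors :: 'a set) Gc_adj S} \<noteq> {}"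
  proof
    assume "{enat (card S) | S. finite S \<and> resolving (zero_divisors :: 'a set) Gc_adj S} = {}"
    then have "metric_dim (zero_divisors :: 'a set) Gc_adj = Inf {}" unfolding metric_dim_def by (metis (no_types, lifting))
    then show False using h by (simp add: top_enat_def)
  qed
  then obtain S where S: "finite S" "resolving (zero_divisors :: 'a set) Gc_adj S" by blast
  let ?V = "zero_divisors :: 'a set"
  define f where "f u = (\<lambda>s\<in>S. gdist ?V Gc_adj u s)" for u
  have inj: "inj_on f (?V - S)"
  proof (rule inj_onI)
    fix x y assume xy: "x \<in> ?V - S" "y \<in> ?V - S" "f x = f y"
    then have "\<forall>s\<in>S. gdist ?V Gc_adj x s = gdist ?V Gc_adj y s"
      unfolding f_def by (metis restrict_apply')
    then show "x = y" using S(2) xy unfolding resolving_def by blast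
  qed
  have sub: "f ` (?V - S) \<subseteq> PiE S (\<lambda>_. {x. x \<le> enat 4})"
  proof
    fix g assume "g \<in> f ` (?V - S)"
    then obtain u where u: "u \<in> ?V" "g = f u" by auto
    have "S \<subseteq> ?V" using S(2) unfolding resolving_def by blast
    then have "\<forall>s\<in>S. gdist ?V Gc_adj u s \<le> enat 4"
      using dist_bound[OF assms] u by blast
    then show "g \<in> PiE S (\<lambda>_. {x. x \<le> enat 4})" using u unfolding f_def by auto
  qed
  have "finite (PiE S (\<lambda>_. {x. x \<le> enat 4}))"
    by (rule finite_PiE[OF S(1)]) (auto intro: finite_enat_bounded)
  then have "finite (f ` (?V - S))" using sub finite_subset by blast
  then have "finite (?V - S)" using inj finite_imageD by blast
  then show "finite ?V" using S(1) by (metis finite_Diff2)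
next
  assume fin: "finite (zero_divisors :: 'a set)"
  have "resolving (zero_divisors :: 'a set) Gc_adj zero_divisors" unfolding resolving_def by auto
  then have "enat (card (zero_divisors :: 'a set)) \<in> {enat (card S) | S. finite S \<and> resolving (zero_divisors :: 'a set) Gc_adj S}"
    using fin by blast
  then have "metric_dim (zero_divisors :: 'a set) Gc_adj \<le> enat (card (zero_divisors :: 'a set))"
    unfolding metric_dim_def by (rule Inf_lower)
  show "metric_dim (zero_divisors :: 'a set) Gc_adj \<noteq> \<infinity>"
  proof
    assume "metric_dim (zero_divisors :: 'a set) Gc_adj = \<infinity>"
    with \<open>metric_dim (zero_divisors :: 'a set) Gc_adj \<le> enat (card (zero_divisors :: 'a set))\<close>
    show False by simp
  qed
qed

end
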